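(* Let $(Y,S,\gamma)$ be a deterministic machine with update function $f\colon Y\times S\to Y$ (so $\gamma(\cdot\mid y,s)=\delta_{f(y,s)}$), and let $(H,\psi_H,\kappa)$ be a consistent Bayesian filtering interpretation of $\gamma$. Fix $n\ge 1$. For $y\in Y$ let $\psi_{S^n,H_n}(\cdot\mid y)\in P(S^n\times H)$ be the joint law of $((s_1,\dots,s_n),h_n)$ under the process: $h_0\sim\psi_H(\cdot\mid y)$ and, for $k=1,\dots,n$, $(h_k,s_k)\sim\kappa(\cdot\mid h_{k-1})$ (each step conditionally on the previous hidden state). Let $\psi_{S^n}(\cdot\mid y)$ be its marginal on $S^n$, and let $f^n\colon Y\times S^n\to Y$ be the iterated update $f^n(y,(s_1,\dots,s_n))=f(\cdots f(f(y,s_1),s_2)\cdots,s_n)$. Then for every $y\in Y$ and all measurable $A\subseteq S^n$, $C\subseteq H$, $$\psi_{S^n,H_n}(A\times C\mid y)=\int_A\psi_H\big(C\mid f^n(y,\mathbf{s})\big)\,\psi_{S^n}(d\mathbf{s}\mid y),$$ i.e. the kernel $(y,\mathbf{s})\mapsto\psi_H(\cdot\mid f^n(y,\mathbf{s}))$ is a conditional (disintegration) of $\psi_{S^n,H_n}$ with respect to $S^n$.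
   Context: All measurable spaces are standard Borel; $P(X)$ denotes probability measures on $X$; a Markov kernel $k\colon X\to P(Z)$ is a measurable map, written $k(E\mid x)$. A machine $(Y,S,\gamma)$ consists of measurable spaces $Y,S$ and a Markov kernel $\gamma\colon Y\times S\to P(Y)$. Given a measurable space $H$ and Markov kernels $\psi_H\colon Y\to P(H)$, $\kappa\colon H\to P(H\times S)$, define $\psi_{S,H'}(E\mid y)=\int_H\kappa(E\mid h)\,\psi_H(dh\mid y)$ for measurable $E\subseteq H\times S$, and $\psi_S(A\mid y)=\psi_{S,H'}(H\times A\mid y)$. The triple $(H,\psi_H,\kappa)$ is a consistent Bayesian filtering interpretation of $\gamma$ if for all $y\in Y$ and measurable $C\subseteq H$, $A\subseteq S$, $B\subseteq Y$: $$\int_{C\times A}\gamma(B\mid y,s)\,\psi_{S,H'}(dh',ds\mid y)=\int_A\int_B\psi_H(C\mid y')\,\gamma(dy'\mid y,s)\,\psi_S(ds\mid y).$$ *)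

theory Defs
  imports "HOL-Probability.Probability"
begin

text \<open>Standard Borel space: Borel-isomorphic to a Borel subset of the reals
  (Kuratowski's characterisation of standard Borel spaces).\<close>
definition standard_borel :: "'a measure \<Rightarrow> bool" where
  "standard_borel M \<longleftrightarrow>
     (\<exists>B \<in> sets (borel :: real measure). \<exists>g h.
        g \<in> measurable M (restrict_space borel B) \<and>
        h \<in> measurable (restrict_space borel B) M \<and>
        (\<forall>x\<in>space M. h (g x) = x) \<and> (\<forall>r\<in>B. g (h r) = r))"

definition markov_kernel :: "'a measure \<Rightarrow> 'b measure \<Rightarrow> ('a \<Rightarrow> 'b measure) \<Rightarrow> bool" where
  "markov_kernel X Z k \<longleftrightarrow> k \<in> measurable X (prob_algebra Z)"

definition psi_SH :: "('y \<Rightarrow> 'h measure) \<Rightarrow> ('h \<Rightarrow> ('h \<times> 's) measure) \<Rightarrow> 'y \<Rightarrow> ('h \<times> 's) measure" where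
  "psi_SH psiH kappa y = psiH y \<bind> kappa"

definition psi_S :: "'s measure \<Rightarrow> ('y \<Rightarrow> 'h measure) \<Rightarrow> ('h \<Rightarrow> ('h \<times> 's) measure) \<Rightarrow> 'y \<Rightarrow> 's measure" where
  "psi_S Ms psiH kappa y = distr (psi_SH psiH kappa y) Ms snd"

definition consistent_BFI ::
  "'y measure \<Rightarrow> 's measure \<Rightarrow> 'h measure \<Rightarrow> ('y \<times> 's \<Rightarrow> 'y measure)
     \<Rightarrow> ('y \<Rightarrow> 'h measure) \<Rightarrow> ('h \<Rightarrow> ('h \<times> 's) measure) \<Rightarrow> bool" where
  "consistent_BFI My Ms Mh gamma psiH kappa \<longleftrightarrow>
     markov_kernel My Mh psiH \<and> markov_kernel Mh (Mh \<Otimes>\<^sub>M Ms) kappa \<and>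
     (\<forall>y\<in>space My. \<forall>C\<in>sets Mh. \<forall>A\<in>sets Ms. \<forall>B\<in>sets My.
        (\<integral>\<^sup>+ p \<in> C \<times> A. emeasure (gamma (y, snd p)) B \<partial>psi_SH psiH kappa y)
        = (\<integral>\<^sup>+ s \<in> A. (\<integral>\<^sup>+ y' \<in> B. emeasure (psiH y') C \<partial>gamma (y, s)) \<partial>psi_S Ms psiH kappa y))"

text \<open>Iterated update f^k(y, s) using s 0, ..., s (k-1) (i.e. s_1..s_k).\<close>
primrec iter_update :: "('y \<times> 's \<Rightarrow> 'y) \<Rightarrow> 'y \<Rightarrow> (nat \<Rightarrow> 's) \<Rightarrow> nat \<Rightarrow> 'y" where
  "iter_update f y s 0 = y"
| "iter_update f y s (Suc k) = f (iter_update f y s k, s k)"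

text \<open>Joint law of ((s_1,...,s_k), h_k), with s_i stored at index i-1,
  as a measure on S^k x H, S^k = PiM {..<k} (\<lambda>_. Ms).\<close>
primrec joint_law :: "'s measure \<Rightarrow> 'h measure \<Rightarrow> ('y \<Rightarrow> 'h measure) \<Rightarrow> ('h \<Rightarrow> ('h \<times> 's) measure)
     \<Rightarrow> nat \<Rightarrow> 'y \<Rightarrow> ((nat \<Rightarrow> 's) \<times> 'h) measure" where
  "joint_law Ms Mh psiH kappa 0 y =
     distr (psiH y) (PiM {..<0} (\<lambda>_. Ms) \<Otimes>\<^sub>M Mh) (\<lambda>h. (\<lambda>_. undefined, h))"
| "joint_law Ms Mh psiH kappa (Suc k) y =
     joint_law Ms Mh psiH kappa k y \<bind>
       (\<lambda>(ss, h). distr (kappa h) (PiM {..<Suc k} (\<lambda>_. Ms) \<Otimes>\<^sub>M Mh)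
                    (\<lambda>(h', s'). (ss(k := s'), h')))"

definition marginal_law :: "'s measure \<Rightarrow> 'h measure \<Rightarrow> ('y \<Rightarrow> 'h measure) \<Rightarrow> ('h \<Rightarrow> ('h \<times> 's) measure)
     \<Rightarrow> nat \<Rightarrow> 'y \<Rightarrow> (nat \<Rightarrow> 's) measure" where
  "marginal_law Ms Mh psiH kappa n y =
     distr (joint_law Ms Mh psiH kappa n y) (PiM {..<n} (\<lambda>_. Ms)) fst"

end

theory Submission
  imports Defs
begin

locale bfi =
  fixes My :: "'y measure" and Ms :: "'s measure" and Mh :: "'h measure"
    and f :: "'y \<times> 's \<Rightarrow> 'y"
    and psiH :: "'y \<Rightarrow> 'h measure" and kappa :: "'h \<Rightarrow> ('h \<times> 's) measure"
  assumes fM[measurable]: "f \<in> My \<Otimes>\<^sub>M Ms \<rightarrow>\<^sub>M My"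
    and psiM[measurable]: "psiH \<in> My \<rightarrow>\<^sub>M prob_algebra Mh"
    and kapM[measurable]: "kappa \<in> Mh \<rightarrow>\<^sub>M prob_algebra (Mh \<Otimes>\<^sub>M Ms)"
    and cons: "\<And>y C A. y \<in> space My \<Longrightarrow> C \<in> sets Mh \<Longrightarrow> A \<in> sets Ms \<Longrightarrow>
       emeasure (psi_SH psiH kappa y) (C \<times> A) = (\<integral>\<^sup>+ s \<in> A. emeasure (psiH (f(y,s))) C \<partial>psi_S Ms psiH kappa y)"
begin

lemma psiSH_meas[measurable]: "psi_SH psiH kappa \<in> My \<rightarrow>\<^sub>M prob_algebra (Mh \<Otimes>\<^sub>M Ms)"
  unfolding psi_SH_def[abs_def] by (rule measurable_bind_prob_space[OF psiM kapM])

lemma psiS_meas[measurable]: "psi_S Ms psiH kappa \<in> My \<rightarrow>\<^sub>M prob_algebra Ms"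
  unfolding psi_S_def[abs_def] by measurable

lemma psiH_sp: "y \<in> space My \<Longrightarrow> prob_space (psiH y) \<and> sets (psiH y) = sets Mh"
  using measurable_space[OF psiM] by (auto simp: space_prob_algebra)
lemma kappa_sp: "h \<in> space Mh \<Longrightarrow> prob_space (kappa h) \<and> sets (kappa h) = sets (Mh \<Otimes>\<^sub>M Ms)"
  using measurable_space[OF kapM] by (auto simp: space_prob_algebra)
lemma psiSH_sp: "y \<in> space My \<Longrightarrow> prob_space (psi_SH psiH kappa y) \<and> sets (psi_SH psiH kappa y) = sets (Mh \<Otimes>\<^sub>M Ms)"
  using measurable_space[OF psiSH_meas] by (auto simp: space_prob_algebra)
lemma psiS_sp: "y \<in> space My \<Longrightarrow> prob_space (psi_S Ms psiH kappa y) \<and> sets (psi_S Ms psiH kappa y) = sets Ms"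
  using measurable_space[OF psiS_meas] by (auto simp: space_prob_algebra)

lemma fy_meas: "y \<in> space My \<Longrightarrow> (\<lambda>s. f (y, s)) \<in> Ms \<rightarrow>\<^sub>M My"
  by measurable

lemma step_kernel: "y \<in> space My \<Longrightarrow>
  (\<lambda>s. distr (psiH (f(y,s))) (Mh \<Otimes>\<^sub>M Ms) (\<lambda>h. (h,s))) \<in> Ms \<rightarrow>\<^sub>M prob_algebra (Mh \<Otimes>\<^sub>M Ms)"
proof -
  assume y: "y \<in> space My"
  have [measurable]: "(\<lambda>s. psiH (f(y,s))) \<in> Ms \<rightarrow>\<^sub>M prob_algebra Mh"
    using measurable_compose[OF fy_meas[OF y] psiM] by simp
  show ?thesis by measurable
qed


lemma onestep: assumes y: "y \<in> space My"
  shows "psi_SH psiH kappa y = psi_S Ms psiH kappa y \<bind> (\<lambda>s. distr (psiH (f(y,s))) (Mh \<Otimes>\<^sub>M Ms) (\<lambda>h. (h,s)))"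
proof -
  let ?E = "{a \<times> b |a b. a \<in> sets Mh \<and> b \<in> sets Ms}"
  let ?O = "space Mh \<times> space Ms"
  have K: "(\<lambda>s. distr (psiH (f(y,s))) (Mh \<Otimes>\<^sub>M Ms) (\<lambda>h. (h,s))) \<in> Ms \<rightarrow>\<^sub>M prob_algebra (Mh \<Otimes>\<^sub>M Ms)"
    by (rule step_kernel[OF y])
  have SA: "psi_S Ms psiH kappa y \<in> space (prob_algebra Ms)"
    using psiS_sp[OF y] by (simp add: space_prob_algebra)
  show ?thesis
  proof (rule measure_eqI_generator_eq[OF Int_stable_pair_measure_generator[of Mh Ms], where \<Omega>="?O" and A="\<lambda>_. ?O"])
    show "?E \<subseteq> Pow ?O" using sets.space_closed[of Mh] sets.space_closed[of Ms] by auto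
    show "sets (psi_SH psiH kappa y) = sigma_sets ?O ?E"
      using psiSH_sp[OF y] by (simp add: sets_pair_measure)
    show "sets (psi_S Ms psiH kappa y \<bind> (\<lambda>s. distr (psiH (f(y,s))) (Mh \<Otimes>\<^sub>M Ms) (\<lambda>h. (h,s)))) = sigma_sets ?O ?E"
      using sets_bind'[OF SA K] by (simp add: sets_pair_measure)
    show "range (\<lambda>_. ?O) \<subseteq> ?E" by blast
    show "(\<Union>i::nat. ?O) = ?O" by simp
    show "emeasure (psi_SH psiH kappa y) ?O \<noteq> \<infinity>" for i :: nat
    proof -
      have "space (psi_SH psiH kappa y) = ?O"
        using psiSH_sp[OF y] sets_eq_imp_space_eq by (metis space_pair_measure)
      then show ?thesis using psiSH_sp[OF y] prob_space.emeasure_space_1 by fastforce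
    qed
    fix X assume "X \<in> ?E"
    then obtain C A where X: "X = C \<times> A" and C: "C \<in> sets Mh" and A: "A \<in> sets Ms" by blast
    have "emeasure (psi_S Ms psiH kappa y \<bind> (\<lambda>s. distr (psiH (f(y,s))) (Mh \<Otimes>\<^sub>M Ms) (\<lambda>h. (h,s)))) X
       = (\<integral>\<^sup>+ s. emeasure (distr (psiH (f(y,s))) (Mh \<Otimes>\<^sub>M Ms) (\<lambda>h. (h,s))) (C \<times> A) \<partial>psi_S Ms psiH kappa y)"
      unfolding X by (rule emeasure_bind_prob_algebra[OF SA K]) (use C A in auto)
    also have "\<dots> = (\<integral>\<^sup>+ s \<in> A. emeasure (psiH (f(y,s))) C \<partial>psi_S Ms psiH kappa y)"
    proof (rule nn_integral_cong)
      fix s assume "s \<in> space (psi_S Ms psiH kappa y)"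
      then have s: "s \<in> space Ms" using psiS_sp[OF y] sets_eq_imp_space_eq by blast
      then have fs: "f (y,s) \<in> space My" using y measurable_space[OF fM] by (auto simp: space_pair_measure)
      have sp: "space (psiH (f(y,s))) = space Mh" using psiH_sp[OF fs] sets_eq_imp_space_eq by blast
      have m: "(\<lambda>h. (h,s)) \<in> psiH (f(y,s)) \<rightarrow>\<^sub>M Mh \<Otimes>\<^sub>M Ms"
        using psiH_sp[OF fs] s by (simp cong: measurable_cong_sets)
      have "(\<lambda>h. (h, s)) -` (C \<times> A) \<inter> space (psiH (f (y, s))) = (if s \<in> A then C else {})"
        using sets.sets_into_space[OF C] sp by auto
      then show "emeasure (distr (psiH (f(y,s))) (Mh \<Otimes>\<^sub>M Ms) (\<lambda>h. (h,s))) (C \<times> A)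
          = emeasure (psiH (f(y,s))) C * indicator A s"
        using C A by (simp add: emeasure_distr[OF m] split: split_indicator)
    qed
    also have "\<dots> = emeasure (psi_SH psiH kappa y) X" using cons[OF y C A] X by simp
    finally show "emeasure (psi_SH psiH kappa y) X = emeasure (psi_S Ms psiH kappa y \<bind> (\<lambda>s. distr (psiH (f(y,s))) (Mh \<Otimes>\<^sub>M Ms) (\<lambda>h. (h,s)))) X" by simp
  qed
qed

lemma onestep_int: assumes y: "y \<in> space My" and g: "g \<in> borel_measurable (Mh \<Otimes>\<^sub>M Ms)"
  shows "(\<integral>\<^sup>+ p. g p \<partial>psi_SH psiH kappa y) = (\<integral>\<^sup>+ s. \<integral>\<^sup>+ h. g (h,s) \<partial>psiH (f(y,s)) \<partial>psi_S Ms psiH kappa y)"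
proof -
  have "(\<integral>\<^sup>+ p. g p \<partial>psi_SH psiH kappa y) = (\<integral>\<^sup>+ s. \<integral>\<^sup>+ p. g p \<partial>distr (psiH (f(y,s))) (Mh \<Otimes>\<^sub>M Ms) (\<lambda>h. (h,s)) \<partial>psi_S Ms psiH kappa y)"
  proof -
    have K: "(\<lambda>s. distr (psiH (f(y,s))) (Mh \<Otimes>\<^sub>M Ms) (\<lambda>h. (h,s))) \<in> psi_S Ms psiH kappa y \<rightarrow>\<^sub>M subprob_algebra (Mh \<Otimes>\<^sub>M Ms)"
      using measurable_prob_algebraD[OF step_kernel[OF y]] psiS_sp[OF y] by (simp cong: measurable_cong_sets)
    show ?thesis unfolding onestep[OF y] using nn_integral_bind[OF g K] by simp
  qed
  also have "\<dots> = (\<integral>\<^sup>+ s. \<integral>\<^sup>+ h. g (h,s) \<partial>psiH (f(y,s)) \<partial>psi_S Ms psiH kappa y)"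
  proof (rule nn_integral_cong)
    fix s assume "s \<in> space (psi_S Ms psiH kappa y)"
    then have s: "s \<in> space Ms" using psiS_sp[OF y] sets_eq_imp_space_eq by blast
    then have fs: "f (y,s) \<in> space My" using y measurable_space[OF fM] by (auto simp: space_pair_measure)
    have m: "(\<lambda>h. (h,s)) \<in> psiH (f(y,s)) \<rightarrow>\<^sub>M Mh \<Otimes>\<^sub>M Ms"
      using psiH_sp[OF fs] s by (simp cong: measurable_cong_sets)
    show "(\<integral>\<^sup>+ p. g p \<partial>distr (psiH (f(y,s))) (Mh \<Otimes>\<^sub>M Ms) (\<lambda>h. (h,s))) = (\<integral>\<^sup>+ h. g (h,s) \<partial>psiH (f(y,s)))"
      using nn_integral_distr[OF m] g by simp
  qed
  finally show ?thesis .
qed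


abbreviation PP :: "nat \<Rightarrow> (nat \<Rightarrow> 's) measure" where "PP k \<equiv> PiM {..<k} (\<lambda>_. Ms)"

lemma iter_meas: "y \<in> space My \<Longrightarrow> k \<le> m \<Longrightarrow> (\<lambda>s. iter_update f y s k) \<in> PP m \<rightarrow>\<^sub>M My"
proof (induction k)
  case 0 then show ?case by simp
next
  case (Suc k)
  have c: "(\<lambda>s. s k) \<in> PP m \<rightarrow>\<^sub>M Ms" using Suc.prems by (intro measurable_component_singleton) auto
  have "(\<lambda>s. (iter_update f y s k, s k)) \<in> PP m \<rightarrow>\<^sub>M My \<Otimes>\<^sub>M Ms"
    using Suc by (intro measurable_Pair c) auto
  from measurable_compose[OF this fM] show ?case by simp
qed

lemma iter_upd: "j \<le> k \<Longrightarrow> iter_update f y (s(k:=t)) j = iter_update f y s j"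
  by (induction j) auto

lemma add_dim: "(\<lambda>(g, x). g(k := x)) \<in> PP k \<Otimes>\<^sub>M Ms \<rightarrow>\<^sub>M PP (Suc k)"
  using measurable_add_dim[of k "{..<k}" "\<lambda>_. Ms"] by (simp add: lessThan_Suc)

lemma K_meas: "(\<lambda>(ss, h). distr (kappa h) (PP (Suc k) \<Otimes>\<^sub>M Mh) (\<lambda>(h', s'). (ss(k := s'), h')))
   \<in> PP k \<Otimes>\<^sub>M Mh \<rightarrow>\<^sub>M prob_algebra (PP (Suc k) \<Otimes>\<^sub>M Mh)"
proof -
  have eq: "(\<lambda>(ss, h). distr (kappa h) (PP (Suc k) \<Otimes>\<^sub>M Mh) (\<lambda>(h', s'). (ss(k := s'), h')))
     = (\<lambda>x. distr (kappa (snd x)) (PP (Suc k) \<Otimes>\<^sub>M Mh) (\<lambda>p. ((fst x)(k := snd p), fst p)))"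
    by (auto simp: fun_eq_iff split_beta')
  have a: "(\<lambda>x. (fst (fst x), snd (snd x))) \<in> (PP k \<Otimes>\<^sub>M Mh) \<Otimes>\<^sub>M (Mh \<Otimes>\<^sub>M Ms) \<rightarrow>\<^sub>M PP k \<Otimes>\<^sub>M Ms"
    by measurable
  have b: "(\<lambda>x. (fst (fst x))(k := snd (snd x))) \<in> (PP k \<Otimes>\<^sub>M Mh) \<Otimes>\<^sub>M (Mh \<Otimes>\<^sub>M Ms) \<rightarrow>\<^sub>M PP (Suc k)"
    using measurable_compose[OF a add_dim] by simp
  have c: "(\<lambda>(x, p). ((fst x)(k := snd p), fst p)) \<in> (PP k \<Otimes>\<^sub>M Mh) \<Otimes>\<^sub>M (Mh \<Otimes>\<^sub>M Ms) \<rightarrow>\<^sub>M PP (Suc k) \<Otimes>\<^sub>M Mh"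
    unfolding split_beta' by (intro measurable_Pair b) measurable
  have d: "(\<lambda>x. kappa (snd x)) \<in> PP k \<Otimes>\<^sub>M Mh \<rightarrow>\<^sub>M prob_algebra (Mh \<Otimes>\<^sub>M Ms)" by measurable
  show ?thesis unfolding eq by (rule measurable_distr_prob_space2[OF d c])
qed

lemma J_sp: "y \<in> space My \<Longrightarrow> joint_law Ms Mh psiH kappa k y \<in> space (prob_algebra (PP k \<Otimes>\<^sub>M Mh))"
proof (induction k)
  case 0
  have u: "(\<lambda>_. undefined) \<in> space (PP 0)" by (simp add: space_PiM PiE_def extensional_def Pi_def)
  have "(\<lambda>h. (\<lambda>_. undefined, h)) \<in> Mh \<rightarrow>\<^sub>M PP 0 \<Otimes>\<^sub>M Mh"
    by (intro measurable_Pair measurable_const[OF u]) simp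
  then have m: "(\<lambda>h. (\<lambda>_. undefined, h)) \<in> psiH y \<rightarrow>\<^sub>M PP 0 \<Otimes>\<^sub>M Mh"
    using psiH_sp[OF 0] by (simp cong: measurable_cong_sets)
  have "prob_space (distr (psiH y) (PP 0 \<Otimes>\<^sub>M Mh) (\<lambda>h. (\<lambda>_. undefined, h)))"
    using psiH_sp[OF 0] m by (intro prob_space.prob_space_distr) auto
  then show ?case by (simp add: space_prob_algebra)
next
  case (Suc k)
  show ?case using prob_space_bind'[OF Suc.IH[OF Suc.prems] K_meas] sets_bind'[OF Suc.IH[OF Suc.prems] K_meas]
    by (simp add: space_prob_algebra)
qed


abbreviation "JJ k y \<equiv> joint_law Ms Mh psiH kappa k y"
abbreviation "MG k y \<equiv> marginal_law Ms Mh psiH kappa k y"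

lemma JJ_sets: "y \<in> space My \<Longrightarrow> sets (JJ k y) = sets (PP k \<Otimes>\<^sub>M Mh)"
  using J_sp[of y k] by (simp add: space_prob_algebra)
lemma JJ_space: "y \<in> space My \<Longrightarrow> space (JJ k y) = space (PP k \<Otimes>\<^sub>M Mh)"
  using JJ_sets sets_eq_imp_space_eq by blast
lemma MG_space: "space (MG k y) = space (PP k)"
  by (simp add: marginal_law_def)

lemma it_sp: "y \<in> space My \<Longrightarrow> s \<in> space (PP k) \<Longrightarrow> iter_update f y s k \<in> space My"
  using measurable_space[OF iter_meas[of y k k]] by auto

lemma upd_meas: "ss \<in> space (PP k) \<Longrightarrow> (\<lambda>p. (ss(k := snd p), fst p)) \<in> Mh \<Otimes>\<^sub>M Ms \<rightarrow>\<^sub>M PP (Suc k) \<Otimes>\<^sub>M Mh"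
proof -
  assume ss: "ss \<in> space (PP k)"
  have "(\<lambda>p. (ss, snd p)) \<in> Mh \<Otimes>\<^sub>M Ms \<rightarrow>\<^sub>M PP k \<Otimes>\<^sub>M Ms"
    using ss by (intro measurable_Pair measurable_const) auto
  from measurable_compose[OF this add_dim] have "(\<lambda>p. ss(k := snd p)) \<in> Mh \<Otimes>\<^sub>M Ms \<rightarrow>\<^sub>M PP (Suc k)"
    by simp
  then show ?thesis by (intro measurable_Pair) auto
qed

lemma chain:
  assumes y: "y \<in> space My"
    and IH: "\<And>g. g \<in> borel_measurable (PP k \<Otimes>\<^sub>M Mh) \<Longrightarrow>
       (\<integral>\<^sup>+ x. g x \<partial>JJ k y) = (\<integral>\<^sup>+ s. \<integral>\<^sup>+ h. g (s,h) \<partial>psiH (iter_update f y s k) \<partial>MG k y)"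
    and g: "g \<in> borel_measurable (PP (Suc k) \<Otimes>\<^sub>M Mh)"
  shows "(\<integral>\<^sup>+ x. g x \<partial>JJ (Suc k) y) =
    (\<integral>\<^sup>+ s. \<integral>\<^sup>+ s'. \<integral>\<^sup>+ h. g (s(k := s'), h) \<partial>psiH (f (iter_update f y s k, s')) \<partial>psi_S Ms psiH kappa (iter_update f y s k) \<partial>MG k y)"
proof -
  let ?K = "(\<lambda>(ss, h). distr (kappa h) (PP (Suc k) \<Otimes>\<^sub>M Mh) (\<lambda>(h', s'). (ss(k := s'), h')))"
  let ?G = "\<lambda>x. \<integral>\<^sup>+ p. g ((fst x)(k := snd p), fst p) \<partial>kappa (snd x)"
  have K': "?K \<in> JJ k y \<rightarrow>\<^sub>M subprob_algebra (PP (Suc k) \<Otimes>\<^sub>M Mh)"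
    using measurable_prob_algebraD[OF K_meas[of k]] JJ_sets[OF y, of k] by (simp cong: measurable_cong_sets)
  have "(\<integral>\<^sup>+ x. g x \<partial>JJ (Suc k) y) = (\<integral>\<^sup>+ z. \<integral>\<^sup>+ x. g x \<partial>?K z \<partial>JJ k y)"
    using nn_integral_bind[OF g K'] by simp
  also have "\<dots> = (\<integral>\<^sup>+ z. ?G z \<partial>JJ k y)"
  proof (rule nn_integral_cong)
    fix z assume "z \<in> space (JJ k y)"
    then obtain ss h where z: "z = (ss, h)" and ss: "ss \<in> space (PP k)" and h: "h \<in> space Mh"
      using JJ_space[OF y] by (cases z) (auto simp: space_pair_measure)
    have m: "(\<lambda>p. (ss(k := snd p), fst p)) \<in> kappa h \<rightarrow>\<^sub>M PP (Suc k) \<Otimes>\<^sub>M Mh"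
      using upd_meas[OF ss] kappa_sp[OF h] by (simp cong: measurable_cong_sets)
    have e: "(\<lambda>(h', s'). (ss(k := s'), h')) = (\<lambda>p. (ss(k := snd p), fst p))" by (auto simp: fun_eq_iff)
    show "(\<integral>\<^sup>+ x. g x \<partial>?K z) = ?G z"
      unfolding z using nn_integral_distr[OF m] g by (simp add: e)
  qed
  also have "\<dots> = (\<integral>\<^sup>+ s. \<integral>\<^sup>+ h. ?G (s,h) \<partial>psiH (iter_update f y s k) \<partial>MG k y)"
  proof (rule IH)
    have a: "(\<lambda>(x, p). ((fst x)(k := snd p), fst p)) \<in> (PP k \<Otimes>\<^sub>M Mh) \<Otimes>\<^sub>M (Mh \<Otimes>\<^sub>M Ms) \<rightarrow>\<^sub>M PP (Suc k) \<Otimes>\<^sub>M Mh"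
    proof -
      have a: "(\<lambda>x. (fst (fst x), snd (snd x))) \<in> (PP k \<Otimes>\<^sub>M Mh) \<Otimes>\<^sub>M (Mh \<Otimes>\<^sub>M Ms) \<rightarrow>\<^sub>M PP k \<Otimes>\<^sub>M Ms"
        by measurable
      have b: "(\<lambda>x. (fst (fst x))(k := snd (snd x))) \<in> (PP k \<Otimes>\<^sub>M Mh) \<Otimes>\<^sub>M (Mh \<Otimes>\<^sub>M Ms) \<rightarrow>\<^sub>M PP (Suc k)"
        using measurable_compose[OF a add_dim] by simp
      show ?thesis unfolding split_beta' by (intro measurable_Pair b) measurable
    qed
    have gm: "(\<lambda>(x, p). g ((fst x)(k := snd p), fst p)) \<in> borel_measurable ((PP k \<Otimes>\<^sub>M Mh) \<Otimes>\<^sub>M (Mh \<Otimes>\<^sub>M Ms))"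
      using measurable_compose[OF a g] by (simp add: split_beta')
    have L: "(\<lambda>x. kappa (snd x)) \<in> PP k \<Otimes>\<^sub>M Mh \<rightarrow>\<^sub>M subprob_algebra (Mh \<Otimes>\<^sub>M Ms)"
      by (intro measurable_prob_algebraD) measurable
    show "?G \<in> borel_measurable (PP k \<Otimes>\<^sub>M Mh)"
      using nn_integral_measurable_subprob_algebra2[OF gm L] by simp
  qed
  also have "\<dots> = (\<integral>\<^sup>+ s. \<integral>\<^sup>+ s'. \<integral>\<^sup>+ h. g (s(k := s'), h) \<partial>psiH (f (iter_update f y s k, s')) \<partial>psi_S Ms psiH kappa (iter_update f y s k) \<partial>MG k y)"
  proof (rule nn_integral_cong)
    fix s assume "s \<in> space (MG k y)"
    then have s: "s \<in> space (PP k)" by (simp add: MG_space)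
    have it: "iter_update f y s k \<in> space My" by (rule it_sp[OF y s])
    have gs: "(\<lambda>p. g (s(k := snd p), fst p)) \<in> borel_measurable (Mh \<Otimes>\<^sub>M Ms)"
      using measurable_compose[OF upd_meas[OF s] g] by simp
    have kk: "kappa \<in> psiH (iter_update f y s k) \<rightarrow>\<^sub>M subprob_algebra (Mh \<Otimes>\<^sub>M Ms)"
      using measurable_prob_algebraD[OF kapM] psiH_sp[OF it] by (simp cong: measurable_cong_sets)
    have "(\<integral>\<^sup>+ h. ?G (s,h) \<partial>psiH (iter_update f y s k)) = (\<integral>\<^sup>+ p. g (s(k := snd p), fst p) \<partial>psi_SH psiH kappa (iter_update f y s k))"
      unfolding psi_SH_def using nn_integral_bind[OF gs kk] by simp
    also have "\<dots> = (\<integral>\<^sup>+ s'. \<integral>\<^sup>+ h. g (s(k := s'), h) \<partial>psiH (f (iter_update f y s k, s')) \<partial>psi_S Ms psiH kappa (iter_update f y s k))"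
      using onestep_int[OF it gs] by simp
    finally show "(\<integral>\<^sup>+ h. ?G (s,h) \<partial>psiH (iter_update f y s k)) = \<dots>" .
  qed
  finally show ?thesis .
qed


lemma main_int:
  assumes y: "y \<in> space My"
  shows "g \<in> borel_measurable (PP k \<Otimes>\<^sub>M Mh) \<Longrightarrow>
       (\<integral>\<^sup>+ x. g x \<partial>JJ k y) = (\<integral>\<^sup>+ s. \<integral>\<^sup>+ h. g (s,h) \<partial>psiH (iter_update f y s k) \<partial>MG k y)"
proof (induction k arbitrary: g)
  case 0
  let ?u = "\<lambda>_::nat. undefined :: 's"
  have u: "?u \<in> space (PP 0)" by (simp add: space_PiM PiE_def extensional_def Pi_def)
  have "(\<lambda>h. (?u, h)) \<in> Mh \<rightarrow>\<^sub>M PP 0 \<Otimes>\<^sub>M Mh"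
    by (intro measurable_Pair measurable_const[OF u]) simp
  then have m: "(\<lambda>h. (?u, h)) \<in> psiH y \<rightarrow>\<^sub>M PP 0 \<Otimes>\<^sub>M Mh"
    using psiH_sp[OF y] by (simp cong: measurable_cong_sets)
  have mf: "fst \<in> PP 0 \<Otimes>\<^sub>M Mh \<rightarrow>\<^sub>M PP 0" by simp
  have MG0: "MG 0 y = distr (psiH y) (PP 0) (\<lambda>h. ?u)"
    unfolding marginal_law_def joint_law.simps using distr_distr[OF mf m] by (simp add: comp_def)
  have m2: "(\<lambda>h. ?u) \<in> psiH y \<rightarrow>\<^sub>M PP 0"
    using psiH_sp[OF y] u by (simp cong: measurable_cong_sets)
  have gi': "(\<lambda>s. \<integral>\<^sup>+ h. g (s, h) \<partial>psiH y) \<in> borel_measurable (PP 0)"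
    using nn_integral_measurable_subprob_algebra2[of "\<lambda>s h. g (s,h)" "PP 0" Mh "\<lambda>_. psiH y"]
      "0.prems" psiH_sp[OF y] measurable_prob_algebraD[OF psiM] measurable_space[OF psiM] y by auto
  interpret P: prob_space "psiH y" using psiH_sp[OF y] by simp
  have "(\<integral>\<^sup>+ x. g x \<partial>JJ 0 y) = (\<integral>\<^sup>+ h. g (?u, h) \<partial>psiH y)"
    using nn_integral_distr[OF m] "0.prems" by simp
  moreover have "(\<integral>\<^sup>+ s. \<integral>\<^sup>+ h. g (s,h) \<partial>psiH (iter_update f y s 0) \<partial>MG 0 y)
      = (\<integral>\<^sup>+ h'. \<integral>\<^sup>+ h. g (?u, h) \<partial>psiH y \<partial>psiH y)"
    unfolding MG0 using nn_integral_distr[OF m2] gi' by simp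
  moreover have "\<dots> = (\<integral>\<^sup>+ h. g (?u, h) \<partial>psiH y)"
    by (simp add: P.emeasure_space_1)
  ultimately show ?case by simp
next
  case (Suc k)
  let ?Phi = "\<lambda>t. \<integral>\<^sup>+ h. g (t, h) \<partial>psiH (iter_update f y t (Suc k))"
  have L: "(\<lambda>t. psiH (iter_update f y t (Suc k))) \<in> PP (Suc k) \<rightarrow>\<^sub>M subprob_algebra Mh"
    using measurable_compose[OF iter_meas[OF y, of "Suc k" "Suc k"] measurable_prob_algebraD[OF psiM]] by simp
  have gm: "(\<lambda>(t, h). g (t, h)) \<in> borel_measurable (PP (Suc k) \<Otimes>\<^sub>M Mh)" using Suc.prems by simp
  have Phim: "?Phi \<in> borel_measurable (PP (Suc k))"
    using nn_integral_measurable_subprob_algebra2[OF gm L] by simp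
  have mf: "fst \<in> JJ (Suc k) y \<rightarrow>\<^sub>M PP (Suc k)"
    using JJ_sets[OF y, of "Suc k"] by (simp cong: measurable_cong_sets)
  have "(\<integral>\<^sup>+ t. ?Phi t \<partial>MG (Suc k) y) = (\<integral>\<^sup>+ x. ?Phi (fst x) \<partial>JJ (Suc k) y)"
    unfolding marginal_law_def using nn_integral_distr[OF mf] Phim by simp
  also have "\<dots> = (\<integral>\<^sup>+ s. \<integral>\<^sup>+ s'. \<integral>\<^sup>+ h. ?Phi (s(k := s')) \<partial>psiH (f (iter_update f y s k, s')) \<partial>psi_S Ms psiH kappa (iter_update f y s k) \<partial>MG k y)"
    using chain[OF y Suc.IH, of "\<lambda>x. ?Phi (fst x)"] Phim by simp
  also have "\<dots> = (\<integral>\<^sup>+ s. \<integral>\<^sup>+ s'. \<integral>\<^sup>+ h. g (s(k := s'), h) \<partial>psiH (f (iter_update f y s k, s')) \<partial>psi_S Ms psiH kappa (iter_update f y s k) \<partial>MG k y)"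
  proof (rule nn_integral_cong)
    fix s assume s: "s \<in> space (MG k y)"
    have s1: "s \<in> space (PP k)" using s by (simp add: MG_space)
    have it: "iter_update f y s k \<in> space My" by (rule it_sp[OF y s1])
    have iu: "iter_update f y (s(k := s')) k = iter_update f y s k" for s' by (rule iter_upd) simp
    show "(\<integral>\<^sup>+ s'. \<integral>\<^sup>+ h. ?Phi (s(k := s')) \<partial>psiH (f (iter_update f y s k, s')) \<partial>psi_S Ms psiH kappa (iter_update f y s k))
      = (\<integral>\<^sup>+ s'. \<integral>\<^sup>+ h. g (s(k := s'), h) \<partial>psiH (f (iter_update f y s k, s')) \<partial>psi_S Ms psiH kappa (iter_update f y s k))"
    proof (rule nn_integral_cong)
      fix s' assume s': "s' \<in> space (psi_S Ms psiH kappa (iter_update f y s k))"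
      have s2: "s' \<in> space Ms" using s' psiS_sp[OF it] sets_eq_imp_space_eq by blast
      have fs: "f (iter_update f y s k, s') \<in> space My"
        using measurable_space[OF fM] it s2 by (auto simp: space_pair_measure)
      interpret P: prob_space "psiH (f (iter_update f y s k, s'))" using psiH_sp[OF fs] by simp
      show "(\<integral>\<^sup>+ h. ?Phi (s(k := s')) \<partial>psiH (f (iter_update f y s k, s')))
        = (\<integral>\<^sup>+ h. g (s(k := s'), h) \<partial>psiH (f (iter_update f y s k, s')))"
        using iu[of s'] by (simp add: P.emeasure_space_1)
    qed
  qed
  also have "\<dots> = (\<integral>\<^sup>+ x. g x \<partial>JJ (Suc k) y)"
    using chain[OF y Suc.IH Suc.prems] by simp
  finally show ?case by simp
qed

end

theorem mainTheorem2:
  fixes My :: "'y measure" and Ms :: "'s measure" and Mh :: "'h measure"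
    and f :: "'y \<times> 's \<Rightarrow> 'y"
    and psiH :: "'y \<Rightarrow> 'h measure" and kappa :: "'h \<Rightarrow> ('h \<times> 's) measure"
    and n :: nat
  assumes "standard_borel My" and "standard_borel Ms" and "standard_borel Mh"
    and "f \<in> measurable (My \<Otimes>\<^sub>M Ms) My"
    and "consistent_BFI My Ms Mh (\<lambda>ys. return My (f ys)) psiH kappa"
    and "n \<ge> 1"
  shows "\<forall>y\<in>space My. \<forall>A\<in>sets (PiM {..<n} (\<lambda>_. Ms)). \<forall>C\<in>sets Mh.
           emeasure (joint_law Ms Mh psiH kappa n y) (A \<times> C)
           = (\<integral>\<^sup>+ s \<in> A. emeasure (psiH (iter_update f y s n)) C \<partial>marginal_law Ms Mh psiH kappa n y)"
proof -
  have fM: "f \<in> My \<Otimes>\<^sub>M Ms \<rightarrow>\<^sub>M My" using assms(4) .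
  have psiM: "psiH \<in> My \<rightarrow>\<^sub>M prob_algebra Mh" and kapM: "kappa \<in> Mh \<rightarrow>\<^sub>M prob_algebra (Mh \<Otimes>\<^sub>M Ms)"
    and CC: "\<And>y C A B. y\<in>space My \<Longrightarrow> C\<in>sets Mh \<Longrightarrow> A\<in>sets Ms \<Longrightarrow> B\<in>sets My \<Longrightarrow>
        (\<integral>\<^sup>+ p \<in> C \<times> A. emeasure (return My (f (y, snd p))) B \<partial>psi_SH psiH kappa y)
        = (\<integral>\<^sup>+ s \<in> A. (\<integral>\<^sup>+ y' \<in> B. emeasure (psiH y') C \<partial>return My (f (y, s))) \<partial>psi_S Ms psiH kappa y)"
    using assms(5) unfolding consistent_BFI_def markov_kernel_def by auto
  have cons: "emeasure (psi_SH psiH kappa y) (C \<times> A) = (\<integral>\<^sup>+ s \<in> A. emeasure (psiH (f(y,s))) C \<partial>psi_S Ms psiH kappa y)"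
    if y: "y \<in> space My" and C: "C \<in> sets Mh" and A: "A \<in> sets Ms" for y C A
  proof -
    have SH: "sets (psi_SH psiH kappa y) = sets (Mh \<Otimes>\<^sub>M Ms)"
      using measurable_space[OF measurable_bind_prob_space[OF psiM kapM] y]
      by (simp add: space_prob_algebra psi_SH_def)
    have "(\<integral>\<^sup>+ p \<in> C \<times> A. emeasure (return My (f (y, snd p))) (space My) \<partial>psi_SH psiH kappa y)
        = (\<integral>\<^sup>+ p. indicator (C \<times> A) p \<partial>psi_SH psiH kappa y)"
    proof (rule nn_integral_cong)
      fix p
      show "emeasure (return My (f (y, snd p))) (space My) * indicator (C \<times> A) p = indicator (C \<times> A) p"
      proof (cases "p \<in> C \<times> A")
        case True
        then have "snd p \<in> space Ms" using sets.sets_into_space[OF A] by auto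
        then have "f (y, snd p) \<in> space My" using measurable_space[OF fM] y by (auto simp: space_pair_measure)
        then show ?thesis using True by simp
      qed simp
    qed
    also have "\<dots> = emeasure (psi_SH psiH kappa y) (C \<times> A)"
      using C A SH by simp
    finally have L: "(\<integral>\<^sup>+ p \<in> C \<times> A. emeasure (return My (f (y, snd p))) (space My) \<partial>psi_SH psiH kappa y)
        = emeasure (psi_SH psiH kappa y) (C \<times> A)" .
    have em: "(\<lambda>y'. emeasure (psiH y') C * indicator (space My) y') \<in> borel_measurable My"
      using measurable_compose[OF measurable_prob_algebraD[OF psiM] measurable_emeasure_subprob_algebra[OF C]]
      by measurable
    have R: "(\<integral>\<^sup>+ s \<in> A. (\<integral>\<^sup>+ y' \<in> space My. emeasure (psiH y') C \<partial>return My (f (y, s))) \<partial>psi_S Ms psiH kappa y)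
        = (\<integral>\<^sup>+ s \<in> A. emeasure (psiH (f(y,s))) C \<partial>psi_S Ms psiH kappa y)"
    proof (rule nn_integral_cong)
      fix s
      show "(\<integral>\<^sup>+ y' \<in> space My. emeasure (psiH y') C \<partial>return My (f (y, s))) * indicator A s
         = emeasure (psiH (f(y,s))) C * indicator A s"
      proof (cases "s \<in> A")
        case True
        then have "s \<in> space Ms" using sets.sets_into_space[OF A] by auto
        then have fs: "f (y, s) \<in> space My" using measurable_space[OF fM] y by (auto simp: space_pair_measure)
        show ?thesis using nn_integral_return[OF fs em] fs True by simp
      qed simp
    qed
    show ?thesis using CC[OF y C A sets.top] L R by simp
  qed
  interpret bfi My Ms Mh f psiH kappa
    by unfold_locales (fact fM psiM kapM cons)+
  show ?thesis
  proof (intro ballI)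
    fix y A C assume y: "y \<in> space My" and A: "A \<in> sets (PP n)" and C: "C \<in> sets Mh"
    have AC: "A \<times> C \<in> sets (PP n \<Otimes>\<^sub>M Mh)" using A C by simp
    have "emeasure (JJ n y) (A \<times> C) = (\<integral>\<^sup>+ x. indicator (A \<times> C) x \<partial>JJ n y)"
      using AC JJ_sets[OF y, of n] by simp
    also have "\<dots> = (\<integral>\<^sup>+ s. \<integral>\<^sup>+ h. indicator (A \<times> C) (s,h) \<partial>psiH (iter_update f y s n) \<partial>MG n y)"
      by (rule main_int[OF y]) (use AC in simp)
    also have "\<dots> = (\<integral>\<^sup>+ s \<in> A. emeasure (psiH (iter_update f y s n)) C \<partial>MG n y)"
    proof (rule nn_integral_cong)
      fix s assume "s \<in> space (MG n y)"
      then have s: "s \<in> space (PP n)" by (simp add: MG_space)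
      have it: "iter_update f y s n \<in> space My" by (rule it_sp[OF y s])
      have Cs: "C \<in> sets (psiH (iter_update f y s n))" using psiH_sp[OF it] C by simp
      have "(\<integral>\<^sup>+ h. indicator (A \<times> C) (s,h) \<partial>psiH (iter_update f y s n))
          = (\<integral>\<^sup>+ h. indicator A s * indicator C h \<partial>psiH (iter_update f y s n))"
        by (intro nn_integral_cong) (simp split: split_indicator)
      also have "\<dots> = indicator A s * emeasure (psiH (iter_update f y s n)) C"
        using nn_integral_cmult_indicator[OF Cs] by simp
      finally show "(\<integral>\<^sup>+ h. indicator (A \<times> C) (s,h) \<partial>psiH (iter_update f y s n))
         = emeasure (psiH (iter_update f y s n)) C * indicator A s" by (simp add: mult.commute)
    qed
    finally show "emeasure (joint_law Ms Mh psiH kappa n y) (A \<times> C)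
           = (\<integral>\<^sup>+ s \<in> A. emeasure (psiH (iter_update f y s n)) C \<partial>marginal_law Ms Mh psiH kappa n y)" .
  qed
qed

end
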